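(* Let $\alpha\in[1,2]$, $1\le n\le m$, and fix a weight vector $\omega=(\omega_1,\dots,\omega_n)$ with $\omega_j\ge0$, $\sum_j\omega_j=1$. Over all $n$-tuples $(\rho_1,\dots,\rho_n)$ of $m\times m$ density matrices, the quantum Jensen–Tsallis divergence $D_\alpha^\omega(\rho_1,\dots,\rho_n)$ attains its maximum value at the degenerate matrices $\rho_j=\delta_j$, $j=1,\dots,n$, where $\delta_j=\mathrm{diag}(0,\dots,0,1,0,\dots,0)$ is the $m\times m$ diagonal matrix whose $j$-th diagonal entry is $1$ and all other entries are $0$.
   Context: An $m\times m$ density matrix is a real symmetric positive semidefinite $m\times m$ matrix with trace $1$. For $\alpha\in(0,1)\cup(1,\infty)$, the quantum Tsallis entropy is $H_\alpha(\rho)=\frac{1}{1-\alpha}\bigl(\mathrm{tr}(\rho^\alpha)-1\bigr)$ ($\rho^\alpha$ via spectral decomposition); for $\alpha=1$, $H_1(\rho)=-\mathrm{tr}(\rho\log\rho)$ is the von Neumann entropy (with $0\log0=0$). The quantum Jensen–Tsallis divergence of density matrices $\rho_1,\dots,\rho_n$ with weights $\omega$ is $$D_\alpha^{\omega}(\rho_1,\dots,\rho_n)=H_\alpha\Bigl(\sum_{j=1}^n\omega_j\rho_j\Bigr)-\sum_{j=1}^n\omega_jH_\alpha(\rho_j).$$ *)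

theory Defs
  imports Complex_Main "Jordan_Normal_Form.Matrix"
begin

text \<open>Real m x m matrices are represented by the Jordan_Normal_Form type real mat
  (with explicit dimension); indices are 0-based.\<close>

definition mat_trace :: "real mat \<Rightarrow> real" where
  "mat_trace A = (\<Sum>i<dim_row A. A $$ (i, i))"

definition density_mat :: "nat \<Rightarrow> real mat \<Rightarrow> bool" where
  "density_mat m \<rho> \<longleftrightarrow> \<rho> \<in> carrier_mat m m \<and> transpose_mat \<rho> = \<rho>
     \<and> (\<forall>v \<in> carrier_vec m. v \<bullet> (\<rho> *\<^sub>v v) \<ge> 0) \<and> mat_trace \<rho> = 1"

definition mat_fun :: "(real \<Rightarrow> real) \<Rightarrow> real mat \<Rightarrow> real mat" where
  "mat_fun f A = (let m = dim_row A in
     SOME B. \<exists>U d. U \<in> carrier_mat m m \<and> transpose_mat U * U = 1\<^sub>m m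
        \<and> A = U * mat_diag m d * transpose_mat U
        \<and> B = U * mat_diag m (\<lambda>i. f (d i)) * transpose_mat U)"

text \<open>Quantum Tsallis entropy; for alpha = 1 the von Neumann entropy
  (note x * ln x = 0 at x = 0 in Isabelle, matching 0 log 0 = 0).\<close>
definition tsallis_entropy :: "real \<Rightarrow> real mat \<Rightarrow> real" where
  "tsallis_entropy \<alpha> \<rho> =
     (if \<alpha> = 1 then - mat_trace (mat_fun (\<lambda>x. x * ln x) \<rho>)
      else (mat_trace (mat_fun (\<lambda>x. x powr \<alpha>) \<rho>) - 1) / (1 - \<alpha>))"

definition weighted_mat_sum :: "nat \<Rightarrow> nat \<Rightarrow> (nat \<Rightarrow> real) \<Rightarrow> (nat \<Rightarrow> real mat) \<Rightarrow> real mat" where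
  "weighted_mat_sum m n \<omega> \<rho> = mat m m (\<lambda>(i, k). \<Sum>j<n. \<omega> j * \<rho> j $$ (i, k))"

definition jensen_tsallis :: "real \<Rightarrow> nat \<Rightarrow> nat \<Rightarrow> (nat \<Rightarrow> real) \<Rightarrow> (nat \<Rightarrow> real mat) \<Rightarrow> real" where
  "jensen_tsallis \<alpha> m n \<omega> \<rho> =
     tsallis_entropy \<alpha> (weighted_mat_sum m n \<omega> \<rho>) - (\<Sum>j<n. \<omega> j * tsallis_entropy \<alpha> (\<rho> j))"

definition delta_mat :: "nat \<Rightarrow> nat \<Rightarrow> real mat" where
  "delta_mat m j = mat_diag m (\<lambda>i. if i = j then 1 else 0)"

end

theory Submission
  imports Defs "HOL-Analysis.Convex" "Jordan_Normal_Form.Char_Poly"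
begin

lemma mult_entry:
  assumes "A \<in> carrier_mat n k" "B \<in> carrier_mat k p" "i < n" "j < p"
  shows "(A * B) $$ (i,j) = (\<Sum>l<k. A $$ (i,l) * B $$ (l,j))"
  using assms by (simp add: scalar_prod_def atLeast0LessThan)

lemma udu_entry:
  assumes U: "(U::real mat) \<in> carrier_mat m m" and i: "i < m" and j: "j < m"
  shows "(U * mat_diag m d * transpose_mat U) $$ (i,j) = (\<Sum>l<m. U$$(i,l) * d l * U$$(j,l))"
proof -
  have "U * mat_diag m d = mat m m (\<lambda>(i,j). U $$ (i,j) * d j)"
    by (rule mat_diag_mult_right[OF U])
  moreover have "(mat m m (\<lambda>(i,j). U $$ (i,j) * d j) * transpose_mat U) $$ (i,j)
     = (\<Sum>l<m. mat m m (\<lambda>(i,j). U $$ (i,j) * d j) $$ (i,l) * transpose_mat U $$ (l,j))"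
    by (rule mult_entry[of _ m m _ m], insert U i j, auto)
  ultimately show ?thesis using U i j by simp
qed

lemma orth_cols:
  assumes U: "(U::real mat) \<in> carrier_mat m m" and o: "transpose_mat U * U = 1\<^sub>m m"
    and k: "k < m" and l: "l < m"
  shows "(\<Sum>a<m. U$$(a,k) * U$$(a,l)) = (if k = l then 1 else 0)"
proof -
  have "(transpose_mat U * U) $$ (k,l) = (\<Sum>a<m. transpose_mat U $$ (k,a) * U $$ (a,l))"
    by (rule mult_entry[of _ m m _ m], insert U k l, auto)
  then show ?thesis using o U k l by simp
qed

lemma orth_rows:
  assumes U: "(U::real mat) \<in> carrier_mat m m" and o: "transpose_mat U * U = 1\<^sub>m m"
    and a: "a < m" and b: "b < m"
  shows "(\<Sum>k<m. U$$(a,k) * U$$(b,k)) = (if a = b then 1 else 0)"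
proof -
  have o2: "U * transpose_mat U = 1\<^sub>m m"
    using mat_mult_left_right_inverse[of "transpose_mat U" m U] U o by auto
  have "(U * transpose_mat U) $$ (a,b) = (\<Sum>k<m. U $$ (a,k) * transpose_mat U $$ (k,b))"
    by (rule mult_entry[of _ m m _ m], insert U a b, auto)
  then show ?thesis using o2 U a b by simp
qed

lemma trace_udu:
  assumes U: "(U::real mat) \<in> carrier_mat m m" and o: "transpose_mat U * U = 1\<^sub>m m"
  shows "mat_trace (U * mat_diag m g * transpose_mat U) = (\<Sum>k<m. g k)"
proof -
  have "mat_trace (U * mat_diag m g * transpose_mat U) = (\<Sum>i<m. \<Sum>l<m. U$$(i,l) * g l * U$$(i,l))"
  proof -
    have e: "\<And>i. i \<in> {..<m} \<Longrightarrow> (U * mat_diag m g * transpose_mat U) $$ (i,i) = (\<Sum>l<m. U$$(i,l) * g l * U$$(i,l))"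
      using udu_entry[OF U] by blast
    have d: "dim_row (U * mat_diag m g * transpose_mat U) = m" using U by simp
    show ?thesis unfolding mat_trace_def d using sum.cong[OF refl e] .
  qed
  also have "\<dots> = (\<Sum>l<m. g l * (\<Sum>i<m. U$$(i,l) * U$$(i,l)))"
    by (subst sum.swap) (simp add: sum_distrib_left mult_ac)
  also have "\<dots> = (\<Sum>l<m. g l)"
    by (rule sum.cong, simp, simp add: orth_cols[OF U o])
  finally show ?thesis .
qed

lemma qf_gen:
  fixes c :: "'l \<Rightarrow> real"
  assumes "finite L"
    and K: "\<And>a b. a < m \<Longrightarrow> b < m \<Longrightarrow> K a b = (\<Sum>l\<in>L. c l * f l a * f l b)"
  shows "(\<Sum>a<m. \<Sum>b<m. x a * K a b * x b) = (\<Sum>l\<in>L. c l * (\<Sum>a<m. x a * f l a)^2)"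
proof -
  have "(\<Sum>a<m. \<Sum>b<m. x a * K a b * x b) = (\<Sum>a<m. \<Sum>b<m. \<Sum>l\<in>L. c l * (x a * f l a) * (x b * f l b))"
  proof (intro sum.cong refl)
    fix a b assume "a \<in> {..<m}" "b \<in> {..<m}"
    then have "K a b = (\<Sum>l\<in>L. c l * f l a * f l b)" by (simp add: K)
    then have "x a * K a b * x b = x a * (\<Sum>l\<in>L. c l * f l a * f l b) * x b" by simp
    also have "\<dots> = (\<Sum>l\<in>L. x a * (c l * f l a * f l b) * x b)"
      by (simp add: sum_distrib_left sum_distrib_right)
    also have "\<dots> = (\<Sum>l\<in>L. c l * (x a * f l a) * (x b * f l b))"
      by (rule sum.cong) (auto simp: mult_ac)
    finally show "x a * K a b * x b = (\<Sum>l\<in>L. c l * (x a * f l a) * (x b * f l b))" .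
  qed
  also have "\<dots> = (\<Sum>a<m. \<Sum>l\<in>L. \<Sum>b<m. c l * (x a * f l a) * (x b * f l b))"
    by (rule sum.cong[OF refl], rule sum.swap)
  also have "\<dots> = (\<Sum>l\<in>L. \<Sum>a<m. \<Sum>b<m. c l * (x a * f l a) * (x b * f l b))"
    by (rule sum.swap)
  also have "\<dots> = (\<Sum>l\<in>L. c l * (\<Sum>a<m. x a * f l a)^2)"
    by (rule sum.cong, simp, simp add: power2_eq_square sum_product sum_distrib_left mult_ac)
  finally show ?thesis .
qed
lemma major:
  fixes \<mu> :: "nat \<Rightarrow> real" and p :: "'i \<Rightarrow> real" and v :: "'i \<Rightarrow> nat \<Rightarrow> real"
    and U :: "real mat" and \<phi> :: "real \<Rightarrow> real"
  assumes U: "U \<in> carrier_mat m m" and o: "transpose_mat U * U = 1\<^sub>m m"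
    and dec: "\<And>a b. a < m \<Longrightarrow> b < m \<Longrightarrow>
       (\<Sum>l<m. \<mu> l * U$$(a,l) * U$$(b,l)) = (\<Sum>i\<in>I. p i * v i a * v i b)"
    and I: "finite I" and p: "\<And>i. i \<in> I \<Longrightarrow> p i \<ge> 0"
    and unit: "\<And>i. i \<in> I \<Longrightarrow> (\<Sum>a<m. (v i a)^2) = 1"
    and cv: "convex_on {0..} \<phi>" and \<phi>0: "\<phi> 0 = 0"
  shows "(\<forall>k<m. \<mu> k \<ge> 0) \<and> (\<Sum>i\<in>I. \<phi> (p i)) \<le> (\<Sum>k<m. \<phi> (\<mu> k))"
proof -
  define K where "K a b = (\<Sum>l<m. \<mu> l * U$$(a,l) * U$$(b,l))" for a b
  have QF: "(\<Sum>l<m. \<mu> l * (\<Sum>a<m. x a * U$$(a,l))^2) = (\<Sum>i\<in>I. p i * (\<Sum>a<m. x a * v i a)^2)" for x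
  proof -
    have "(\<Sum>a<m. \<Sum>b<m. x a * K a b * x b) = (\<Sum>l<m. \<mu> l * (\<Sum>a<m. x a * U$$(a,l))^2)"
      by (rule qf_gen[of "{..<m}" m K \<mu> "\<lambda>l a. U$$(a,l)"], auto simp: K_def)
    moreover have "(\<Sum>a<m. \<Sum>b<m. x a * K a b * x b) = (\<Sum>i\<in>I. p i * (\<Sum>a<m. x a * v i a)^2)"
      by (rule qf_gen[of I m K p v], insert I, auto simp: K_def dec)
    ultimately show ?thesis by simp
  qed
  have oc: "\<And>k l. k < m \<Longrightarrow> l < m \<Longrightarrow> (\<Sum>a<m. U$$(a,k) * U$$(a,l)) = (if k = l then 1 else 0)"
    using orth_cols[OF U o] by blast
  have orow: "\<And>a b. a < m \<Longrightarrow> b < m \<Longrightarrow> (\<Sum>k<m. U$$(a,k) * U$$(b,k)) = (if a = b then 1 else 0)"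
    using orth_rows[OF U o] by blast
  define y where "y i k = (\<Sum>a<m. v i a * U$$(a,k))" for i k
  have mu: "\<mu> k = (\<Sum>i\<in>I. p i * (y i k)^2)" if k: "k < m" for k
  proof -
    have "(\<Sum>l<m. \<mu> l * (\<Sum>a<m. U$$(a,k) * U$$(a,l))^2) = (\<Sum>l<m. if k = l then \<mu> l else 0)"
      by (rule sum.cong, simp, simp add: oc k)
    also have "\<dots> = \<mu> k" using k by simp
    finally have 1: "(\<Sum>l<m. \<mu> l * (\<Sum>a<m. U$$(a,k) * U$$(a,l))^2) = \<mu> k" .
    have 2: "(\<Sum>a<m. U$$(a,k) * v i a) = y i k" for i unfolding y_def by (simp add: mult.commute)
    show ?thesis using QF[of "\<lambda>a. U$$(a,k)"] 1 2 by simp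
  qed
  have mu0: "\<mu> k \<ge> 0" if "k < m" for k
    unfolding mu[OF that] by (rule sum_nonneg) (simp add: p)
  have ysq: "(\<Sum>k<m. (y i k)^2) = 1" if i: "i \<in> I" for i
  proof -
    define K' where "K' a b = (\<Sum>k<m. 1 * U$$(a,k) * U$$(b,k))" for a b
    have "(\<Sum>a<m. \<Sum>b<m. v i a * K' a b * v i b) = (\<Sum>k<m. 1 * (\<Sum>a<m. v i a * U$$(a,k))^2)"
      by (rule qf_gen[of "{..<m}" m K' "\<lambda>_. 1" "\<lambda>l a. U$$(a,l)"], auto simp: K'_def)
    moreover have "(\<Sum>a<m. \<Sum>b<m. v i a * K' a b * v i b) = (\<Sum>a<m. \<Sum>b<m. if a = b then (v i a)^2 else 0)"
      by (intro sum.cong refl) (auto simp: K'_def orow power2_eq_square)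
    moreover have "\<dots> = (\<Sum>a<m. (v i a)^2)" by simp
    ultimately show ?thesis using unit[OF i] unfolding y_def by simp
  qed
  define a where "a i k = p i * (y i k)^2 / \<mu> k" for i k
  have amu: "a i k * \<mu> k = p i * (y i k)^2" if i: "i \<in> I" and k: "k < m" for i k
  proof (cases "\<mu> k = 0")
    case True
    have "(\<Sum>i\<in>I. p i * (y i k)^2) = 0" using mu[OF k] True by simp
    then have "\<forall>i\<in>I. p i * (y i k)^2 = 0"
      using sum_nonneg_eq_0_iff[OF I] p by (simp add: sum_nonneg_eq_0_iff[OF I] p)
    then show ?thesis using True i by simp
  next
    case False
    then show ?thesis unfolding a_def by simp
  qed
  have a0: "a i k \<ge> 0" if "i \<in> I" "k < m" for i k
    unfolding a_def using p[OF that(1)] mu0[OF that(2)] by simp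
  have sum_amu: "(\<Sum>k<m. a i k * \<mu> k) = p i" if i: "i \<in> I" for i
  proof -
    have "(\<Sum>k<m. a i k * \<mu> k) = (\<Sum>k<m. p i * (y i k)^2)" by (rule sum.cong) (auto simp: amu i)
    also have "\<dots> = p i" by (simp add: sum_distrib_left[symmetric] ysq i)
    finally show ?thesis .
  qed
  have sa: "(\<Sum>k<m. a i k) \<le> 1" if i: "i \<in> I" for i
  proof -
    define T where "T = (\<Sum>k<m. (y i k)^2 / \<mu> k)"
    define c where "c k = y i k / \<mu> k" for k
    define x where "x a' = (\<Sum>k<m. U$$(a',k) * c k)" for a'
    have xU: "(\<Sum>a'<m. x a' * U$$(a',l)) = c l" if l: "l < m" for l
    proof -
      have "(\<Sum>a'<m. x a' * U$$(a',l)) = (\<Sum>a'<m. \<Sum>k<m. c k * (U$$(a',k) * U$$(a',l)))"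
        unfolding x_def sum_distrib_right by (intro sum.cong refl) (simp add: mult_ac)
      also have "\<dots> = (\<Sum>k<m. c k * (\<Sum>a'<m. U$$(a',k) * U$$(a',l)))"
        by (subst sum.swap) (simp add: sum_distrib_left)
      also have "\<dots> = (\<Sum>k<m. if k = l then c k else 0)"
        by (rule sum.cong) (auto simp: oc l)
      also have "\<dots> = c l" using l by simp
      finally show ?thesis .
    qed
    have lhs: "(\<Sum>l<m. \<mu> l * (\<Sum>a'<m. x a' * U$$(a',l))^2) = T"
      unfolding T_def
      by (rule sum.cong) (auto simp: xU c_def power_divide power2_eq_square)
    have xv: "(\<Sum>a'<m. x a' * v i a') = T"
    proof -
      have "(\<Sum>a'<m. x a' * v i a') = (\<Sum>a'<m. \<Sum>k<m. c k * (v i a' * U$$(a',k)))"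
        unfolding x_def sum_distrib_right by (intro sum.cong refl) (simp add: mult_ac)
      also have "\<dots> = (\<Sum>k<m. c k * y i k)"
        by (subst sum.swap) (simp add: sum_distrib_left y_def)
      also have "\<dots> = T" unfolding T_def c_def by (rule sum.cong) (auto simp: power2_eq_square)
      finally show ?thesis .
    qed
    have "p i * (\<Sum>a'<m. x a' * v i a')^2 \<le> (\<Sum>i\<in>I. p i * (\<Sum>a'<m. x a' * v i a')^2)"
      by (rule member_le_sum[OF i _ I]) (simp add: p)
    then have TT: "p i * T^2 \<le> T" using QF[of x] lhs xv by simp
    have T0: "T \<ge> 0" unfolding T_def by (rule sum_nonneg) (simp add: mu0)
    have sT: "(\<Sum>k<m. a i k) = p i * T"
      unfolding a_def T_def by (simp add: sum_distrib_left)
    have "p i * T \<le> 1"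
    proof (cases "T = 0")
      case False
      then have "T > 0" using T0 by simp
      moreover have "(p i * T) * T \<le> 1 * T" using TT by (simp add: power2_eq_square mult_ac)
      ultimately show ?thesis by (simp add: mult_le_cancel_right)
    qed simp
    then show ?thesis using sT by simp
  qed
  have jensen: "\<phi> (p i) \<le> (\<Sum>k<m. a i k * \<phi> (\<mu> k))" if i: "i \<in> I" for i
  proof -
    define s where "s = (\<Sum>k<m. a i k)"
    define w where "w k = (if k < m then a i k else 1 - s)" for k
    define z where "z k = (if k < m then \<mu> k else 0)" for k
    have w1: "(\<Sum>k<Suc m. w k) = 1"
      unfolding w_def s_def by simp
    have wz: "(\<Sum>k<Suc m. w k *\<^sub>R z k) = p i"
      unfolding w_def z_def using sum_amu[OF i] by simp
    have wphi: "(\<Sum>k<Suc m. w k * \<phi> (z k)) = (\<Sum>k<m. a i k * \<phi> (\<mu> k))"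
      unfolding w_def z_def by (simp add: \<phi>0)
    have "\<phi> (\<Sum>k\<in>{..<Suc m}. w k *\<^sub>R z k) \<le> (\<Sum>k\<in>{..<Suc m}. w k * \<phi> (z k))"
    proof (rule convex_on_sum[OF _ _ cv])
      show "\<And>k. k \<in> {..<Suc m} \<Longrightarrow> 0 \<le> w k"
        unfolding w_def s_def using a0[OF i] sa[OF i] by auto
      show "\<And>k. k \<in> {..<Suc m} \<Longrightarrow> z k \<in> {0..}"
        unfolding z_def using mu0 by auto
    qed (use w1 in auto)
    then show ?thesis using wz wphi by simp
  qed
  have "(\<Sum>i\<in>I. \<phi> (p i)) \<le> (\<Sum>i\<in>I. \<Sum>k<m. a i k * \<phi> (\<mu> k))"
    by (rule sum_mono) (rule jensen)
  also have "\<dots> = (\<Sum>k<m. \<phi> (\<mu> k) * (\<Sum>i\<in>I. a i k))"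
    by (subst sum.swap) (simp add: sum_distrib_left mult_ac)
  also have "\<dots> = (\<Sum>k<m. \<phi> (\<mu> k))"
  proof (rule sum.cong[OF refl])
    fix k assume k: "k \<in> {..<m}"
    have "(\<Sum>i\<in>I. a i k) = \<mu> k / \<mu> k"
      unfolding a_def using mu k by (simp add: sum_divide_distrib[symmetric])
    then show "\<phi> (\<mu> k) * (\<Sum>i\<in>I. a i k) = \<phi> (\<mu> k)"
      by (cases "\<mu> k = 0") (auto simp: \<phi>0)
  qed
  finally show ?thesis using mu0 by blast
qed
lemma sum_sq_pos:
  fixes z :: "nat \<Rightarrow> real"
  assumes "i < m" "z i \<noteq> 0"
  shows "(\<Sum>j<m. (z j)^2) > 0"
proof -
  have "(z i)^2 \<le> (\<Sum>j<m. (z j)^2)" by (rule member_le_sum) (use assms in auto)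
  moreover have "(z i)^2 > 0" using assms by simp
  ultimately show ?thesis by linarith
qed

lemma normalize_eig:
  fixes z :: "nat \<Rightarrow> real"
  assumes ev: "\<And>i. i < m \<Longrightarrow> (\<Sum>j<m. A$$(i,j) * z j) = lam * z i"
    and nz: "i0 < m" "z i0 \<noteq> 0"
  shows "\<exists>u lam. (\<forall>i<m. (\<Sum>j<m. A$$(i,j) * u j) = lam * u i) \<and> (\<Sum>i<m. (u i)^2) = 1"
proof -
  define s where "s = sqrt (\<Sum>j<m. (z j)^2)"
  have pos: "(\<Sum>j<m. (z j)^2) > 0" using sum_sq_pos[of i0 m z] nz by blast
  then have s0: "s > 0" unfolding s_def by simp
  define u where "u j = z j / s" for j
  have "(\<Sum>j<m. A$$(i,j) * u j) = lam * u i" if "i < m" for i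
  proof -
    have "(\<Sum>j<m. A$$(i,j) * u j) = (\<Sum>j<m. A$$(i,j) * z j) / s"
      unfolding u_def by (simp add: sum_divide_distrib)
    then show ?thesis using ev[OF that] unfolding u_def by simp
  qed
  moreover have "(\<Sum>i<m. (u i)^2) = 1"
  proof -
    have "(\<Sum>i<m. (u i)^2) = (\<Sum>i<m. (z i)^2) / s^2"
      unfolding u_def by (simp add: power_divide sum_divide_distrib)
    also have "s^2 = (\<Sum>j<m. (z j)^2)" unfolding s_def using pos by simp
    finally show ?thesis using pos by simp
  qed
  ultimately show ?thesis by blast
qed

lemma real_eigvec:
  fixes A :: "real mat"
  assumes A: "A \<in> carrier_mat m m" and sym: "transpose_mat A = A" and m: "0 < m"
  shows "\<exists>u lam. (\<forall>i<m. (\<Sum>j<m. A$$(i,j) * u j) = lam * u i) \<and> (\<Sum>i<m. (u i)^2) = 1"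
proof -
  define Ac where "Ac = map_mat complex_of_real A"
  have Ac: "Ac \<in> carrier_mat m m" unfolding Ac_def using A by simp
  obtain as where cp: "char_poly Ac = (\<Prod>a\<leftarrow>as. [:- a, 1:])" and len: "length as = m"
    using char_poly_factorized[OF Ac] by blast
  obtain e rest where as: "as = e # rest" using len m by (cases as) auto
  have "poly (char_poly Ac) e = 0" unfolding cp as by simp
  then have "eigenvalue Ac e" using eigenvalue_root_char_poly[OF Ac] by simp
  then obtain v where "eigenvector Ac v e" unfolding eigenvalue_def by blast
  then have v: "v \<in> carrier_vec m" and v0: "v \<noteq> 0\<^sub>v m" and Av: "Ac *\<^sub>v v = e \<cdot>\<^sub>v v"
    unfolding eigenvector_def using Ac by auto
  have eq: "(\<Sum>j<m. complex_of_real (A$$(i,j)) * v$j) = e * v$i" if i: "i < m" for i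
  proof -
    have "(Ac *\<^sub>v v) $ i = (e \<cdot>\<^sub>v v) $ i" using Av by simp
    then show ?thesis using i v A unfolding Ac_def
      by (simp add: scalar_prod_def atLeast0LessThan)
  qed
  define x where "x j = Re (v$j)" for j
  define y where "y j = Im (v$j)" for j
  define a where "a = Re e"
  define b where "b = Im e"
  have re: "(\<Sum>j<m. A$$(i,j) * x j) = a * x i - b * y i" if i: "i < m" for i
    using arg_cong[OF eq[OF i], of Re] unfolding x_def y_def a_def b_def by (simp add: Re_sum)
  have im: "(\<Sum>j<m. A$$(i,j) * y j) = b * x i + a * y i" if i: "i < m" for i
    using arg_cong[OF eq[OF i], of Im] unfolding x_def y_def a_def b_def by (simp add: Im_sum)
  have Asym: "A$$(i,j) = A$$(j,i)" if "i < m" "j < m" for i j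
  proof -
    have "transpose_mat A $$ (i,j) = A $$ (j,i)" using that A by simp
    then show ?thesis using sym by simp
  qed
  have "(\<Sum>i<m. y i * (\<Sum>j<m. A$$(i,j) * x j)) = (\<Sum>i<m. \<Sum>j<m. y i * A$$(i,j) * x j)"
    by (simp add: sum_distrib_left mult_ac)
  also have "\<dots> = (\<Sum>j<m. \<Sum>i<m. y i * A$$(i,j) * x j)" by (rule sum.swap)
  also have "\<dots> = (\<Sum>j<m. x j * (\<Sum>i<m. A$$(j,i) * y i))"
    by (intro sum.cong refl) (auto simp: sum_distrib_left mult_ac Asym)
  finally have "(\<Sum>i<m. y i * (a * x i - b * y i)) = (\<Sum>j<m. x j * (b * x j + a * y j))"
    by (simp add: re im)
  then have "a * (\<Sum>i<m. x i * y i) - b * (\<Sum>i<m. (y i)^2) = b * (\<Sum>i<m. (x i)^2) + a * (\<Sum>i<m. x i * y i)"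
    by (simp add: algebra_simps sum_subtractf sum.distrib sum_distrib_left power2_eq_square)
  then have b0: "b * ((\<Sum>i<m. (x i)^2) + (\<Sum>i<m. (y i)^2)) = 0" by (simp add: algebra_simps)
  obtain i0 where i0: "i0 < m" "v $ i0 \<noteq> 0"
  proof -
    { assume "\<forall>i<m. v $ i = 0"
      then have "v = 0\<^sub>v m" using v by (intro eq_vecI) auto
      with v0 have False by simp }
    then show ?thesis using that by blast
  qed
  then have xy: "x i0 \<noteq> 0 \<or> y i0 \<noteq> 0" unfolding x_def y_def by (simp add: complex_eq_iff)
  have "(\<Sum>i<m. (x i)^2) + (\<Sum>i<m. (y i)^2) > 0"
  proof -
    have "(\<Sum>i<m. (x i)^2) \<ge> 0" "(\<Sum>i<m. (y i)^2) \<ge> 0" by (auto intro: sum_nonneg)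
    then show ?thesis using xy sum_sq_pos[OF i0(1), of x] sum_sq_pos[OF i0(1), of y] by auto
  qed
  then have "b = 0" using b0 by simp
  then have re': "\<And>i. i < m \<Longrightarrow> (\<Sum>j<m. A$$(i,j) * x j) = a * x i"
    and im': "\<And>i. i < m \<Longrightarrow> (\<Sum>j<m. A$$(i,j) * y j) = a * y i" using re im by auto
  show ?thesis
  proof (cases "x i0 = 0")
    case True
    then show ?thesis using normalize_eig[OF im' i0(1)] xy by auto
  next
    case False
    then show ?thesis using normalize_eig[OF re' i0(1)] by auto
  qed
qed
lemma householder:
  fixes u :: "nat \<Rightarrow> real"
  assumes unit: "(\<Sum>i<N. (u i)^2) = 1" and N: "0 < N"
  shows "\<exists>H. H \<in> carrier_mat N N \<and> transpose_mat H = H \<and> H * H = 1\<^sub>m N \<and> (\<forall>i<N. H$$(i,0) = u i)"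
proof -
  define w where "w i = u i - (if i = 0 then 1 else 0)" for i
  define S where "S = (\<Sum>i<N. (w i)^2)"
  define c where "c = 2 / S"
  define H where "H = mat N N (\<lambda>(i,j). (if i = j then 1 else 0) - c * w i * w j)"
  have Hc: "H \<in> carrier_mat N N" unfolding H_def by simp
  have He: "H$$(i,j) = (if i = j then 1 else 0) - c * w i * w j" if "i < N" "j < N" for i j
    unfolding H_def using that by simp
  have wsq: "(w i)^2 = (u i)^2 - 2 * (if i = 0 then u i else 0) + (if i = 0 then 1 else 0)" for i
    unfolding w_def by (cases "i = 0") (auto simp: power2_diff)
  have S2: "S = 2 - 2 * u 0"
  proof -
    have a: "(\<Sum>i<N. (if i = 0 then u i else 0)) = u 0" using N by simp
    have b: "(\<Sum>i<N. (if i = 0 then 1 else (0::real))) = 1" using N by simp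
    have c2: "(\<Sum>i<N. 2 * (if i = 0 then u i else 0)) = 2 * (\<Sum>i<N. (if i = 0 then u i else 0))"
      by (rule sum_distrib_left[symmetric])
    have "S = (\<Sum>i<N. (u i)^2) - (\<Sum>i<N. 2 * (if i = 0 then u i else 0)) + (\<Sum>i<N. if i = 0 then 1 else (0::real))"
      unfolding S_def wsq by (simp add: sum.distrib sum_subtractf)
    then show ?thesis using a b c2 unit by simp
  qed
  have cS: "c * c * S = 2 * c"
  proof (cases "S = 0")
    case True then show ?thesis unfolding c_def by simp
  next
    case False then show ?thesis unfolding c_def by (simp add: field_simps power2_eq_square)
  qed
  have HH: "H * H = 1\<^sub>m N"
  proof (rule eq_matI)
    fix i j assume i: "i < dim_row (1\<^sub>m N)" and j: "j < dim_col (1\<^sub>m N)"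
    then have i: "i < N" and j: "j < N" by auto
    have "(H * H) $$ (i,j) = (\<Sum>k<N. H$$(i,k) * H$$(k,j))"
      by (rule mult_entry[OF Hc Hc i j])
    also have "\<dots> = (\<Sum>k<N. (if k = i then (if i = j then 1 else 0) else 0)
         - (if i = k then c * w k * w j else 0) - (if k = j then c * w i * w k else 0)
         + c * c * w i * w j * (w k)^2)"
      by (rule sum.cong) (auto simp: He i j algebra_simps power2_eq_square)
    also have "\<dots> = (if i = j then 1 else 0) - c * w i * w j - c * w i * w j + c * c * w i * w j * S"
      using i j unfolding S_def by (simp add: sum.distrib sum_subtractf sum_distrib_left)
    also have "\<dots> = (if i = j then 1 else 0)"
    proof -
      have "c * c * w i * w j * S = (c * c * S) * (w i * w j)" by (simp add: mult_ac)
      also have "\<dots> = 2 * c * (w i * w j)" using cS by simp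
      finally show ?thesis by (simp add: algebra_simps)
    qed
    finally show "(H * H) $$ (i,j) = 1\<^sub>m N $$ (i,j)" using i j by simp
  qed (use Hc in auto)
  have Ht: "transpose_mat H = H"
    by (rule eq_matI) (use Hc in \<open>auto simp: He mult_ac\<close>)
  have Hu: "H$$(i,0) = u i" if i: "i < N" for i
  proof (cases "S = 0")
    case True
    have "\<forall>k\<in>{..<N}. (w k)^2 = 0"
      using True unfolding S_def by (subst sum_nonneg_eq_0_iff[symmetric]) auto
    then have "w i = 0" using i by simp
    then show ?thesis using He[OF i N] unfolding w_def by (auto split: if_splits)
  next
    case False
    then have "w 0 \<noteq> 0" using S2 unfolding w_def by auto
    then have "c * w 0 = -1" unfolding c_def S2 w_def by (simp add: field_simps)
    then have "c * w i * w 0 = - w i" by (metis mult.assoc mult.commute mult_minus1)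
    then show ?thesis using He[OF i N] unfolding w_def by auto
  qed
  show ?thesis using Hc Ht HH Hu by blast
qed
theorem spectral:
  fixes A :: "real mat"
  assumes "A \<in> carrier_mat N N" "transpose_mat A = A"
  shows "\<exists>U d. U \<in> carrier_mat N N \<and> transpose_mat U * U = 1\<^sub>m N \<and> A = U * mat_diag N d * transpose_mat U"
  using assms
proof (induction N arbitrary: A)
  case 0
  show ?case
    by (rule exI[of _ "1\<^sub>m 0"], rule exI[of _ "\<lambda>_. 0"]) (use 0 in \<open>auto intro!: eq_matI\<close>)
next
  case (Suc m)
  let ?N = "Suc m"
  have Ac: "A \<in> carrier_mat ?N ?N" and Asym: "transpose_mat A = A" using Suc.prems by auto
  obtain u lam where eig: "\<forall>i<?N. (\<Sum>j<?N. A$$(i,j) * u j) = lam * u i" and un: "(\<Sum>i<?N. (u i)^2) = 1"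
    using real_eigvec[OF Ac Asym] by auto
  obtain H where Hc: "H \<in> carrier_mat ?N ?N" and Ht: "transpose_mat H = H" and HH: "H * H = 1\<^sub>m ?N"
    and Hu: "\<forall>i<?N. H$$(i,0) = u i"
    using householder[OF un] by auto
  have HHX: "H * (H * X) = X" if "X \<in> carrier_mat ?N k" for X k
  proof -
    have "H * (H * X) = (H * H) * X" using Hc that by simp
    then show ?thesis using HH that by simp
  qed
  define B where "B = H * A * H"
  have Bc: "B \<in> carrier_mat ?N ?N" unfolding B_def using Hc Ac by auto
  have Bt: "transpose_mat B = B"
  proof -
    have "transpose_mat B = transpose_mat H * transpose_mat (H * A)"
      unfolding B_def by (rule transpose_mult[of _ ?N ?N]) (use Hc Ac in auto)
    also have "transpose_mat (H * A) = transpose_mat A * transpose_mat H"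
      by (rule transpose_mult[of _ ?N ?N]) (use Hc Ac in auto)
    finally show ?thesis unfolding B_def using Ht Asym Hc Ac by simp
  qed
  have B0: "B$$(i,0) = (if i = 0 then lam else 0)" if i: "i < ?N" for i
  proof -
    have "B$$(i,0) = (\<Sum>k<?N. (H*A)$$(i,k) * H$$(k,0))"
      unfolding B_def by (rule mult_entry[of _ ?N ?N]) (use Hc Ac i in auto)
    also have "\<dots> = (\<Sum>k<?N. (\<Sum>l<?N. H$$(i,l) * A$$(l,k)) * u k)"
      by (rule sum.cong[OF refl]) (simp add: mult_entry[OF Hc Ac i] Hu)
    also have "\<dots> = (\<Sum>l<?N. H$$(i,l) * (\<Sum>k<?N. A$$(l,k) * u k))"
      unfolding sum_distrib_right sum_distrib_left by (subst sum.swap) (simp add: mult.assoc)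
    also have "\<dots> = (\<Sum>l<?N. H$$(i,l) * (lam * H$$(l,0)))"
      by (rule sum.cong[OF refl]) (simp add: eig Hu del: sum.lessThan_Suc)
    also have "\<dots> = lam * (H*H)$$(i,0)"
      by (simp add: mult_entry[OF Hc Hc i] sum_distrib_left mult_ac del: sum.lessThan_Suc)
    also have "\<dots> = (if i = 0 then lam else 0)" using HH i by simp
    finally show ?thesis .
  qed
  have Bs: "B$$(i,j) = B$$(j,i)" if "i < ?N" "j < ?N" for i j
  proof -
    have "transpose_mat B $$ (i,j) = B$$(j,i)" using that Bc by simp
    then show ?thesis using Bt by simp
  qed
  define C where "C = mat m m (\<lambda>(i,j). B$$(Suc i, Suc j))"
  have Cc: "C \<in> carrier_mat m m" unfolding C_def by simp
  have Ct: "transpose_mat C = C" unfolding C_def by (rule eq_matI) (auto simp: Bs)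
  obtain V D where Vc: "V \<in> carrier_mat m m" and Vo: "transpose_mat V * V = 1\<^sub>m m"
    and CV: "C = V * mat_diag m D * transpose_mat V"
    using Suc.IH[OF Cc Ct] by auto
  define U' where "U' = mat ?N ?N (\<lambda>(i,j). if i = 0 then (if j = 0 then 1 else 0) else if j = 0 then 0 else V$$(i-1,j-1))"
  define d' where "d' l = (if l = 0 then lam else D (l-1))" for l
  have U'c: "U' \<in> carrier_mat ?N ?N" unfolding U'_def by simp
  have U'0: "U'$$(0,j) = (if j = 0 then 1 else 0)" if "j < ?N" for j
    unfolding U'_def using that by simp
  have U'S0: "U'$$(Suc a,0) = 0" if "a < m" for a
    unfolding U'_def using that by simp
  have U'SS: "U'$$(Suc a,Suc b) = V$$(a,b)" if "a < m" "b < m" for a b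
    unfolding U'_def using that by simp
  have U'o: "transpose_mat U' * U' = 1\<^sub>m ?N"
  proof (rule eq_matI)
    fix k l assume "k < dim_row (1\<^sub>m ?N)" "l < dim_col (1\<^sub>m ?N)"
    then have k: "k < ?N" and l: "l < ?N" by auto
    have "(transpose_mat U' * U')$$(k,l) = (\<Sum>a<?N. transpose_mat U'$$(k,a) * U'$$(a,l))"
      by (rule mult_entry[of _ ?N ?N]) (use U'c k l in auto)
    also have "\<dots> = (\<Sum>a<?N. U'$$(a,k) * U'$$(a,l))"
      by (rule sum.cong[OF refl]) (use U'c k in auto)
    also have "\<dots> = U'$$(0,k) * U'$$(0,l) + (\<Sum>a<m. U'$$(Suc a,k) * U'$$(Suc a,l))"
      by (subst sum.lessThan_Suc_shift) simp
    also have "\<dots> = (if k = l then 1 else 0)"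
    proof (cases k)
      case 0
      have z: "(\<Sum>a<m. U'$$(Suc a,k) * U'$$(Suc a,l)) = 0"
        by (rule sum.neutral) (auto simp: U'S0 \<open>k = 0\<close>)
      show ?thesis using \<open>k = 0\<close> l z by (simp add: U'0)
    next
      case (Suc k')
      show ?thesis
      proof (cases l)
        case 0
        have z: "(\<Sum>a<m. U'$$(Suc a,k) * U'$$(Suc a,l)) = 0"
          by (rule sum.neutral) (auto simp: U'S0 \<open>l = 0\<close>)
        then show ?thesis using \<open>k = Suc k'\<close> \<open>l = 0\<close> k by (simp add: U'0)
      next
        case (Suc l')
        have "(\<Sum>a<m. U'$$(Suc a,k) * U'$$(Suc a,l)) = (\<Sum>a<m. V$$(a,k') * V$$(a,l'))"
          by (rule sum.cong[OF refl]) (use \<open>k = Suc k'\<close> \<open>l = Suc l'\<close> k l in \<open>auto simp: U'SS\<close>)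
        also have "\<dots> = (if k' = l' then 1 else 0)"
          using orth_cols[OF Vc Vo] \<open>k = Suc k'\<close> \<open>l = Suc l'\<close> k l by simp
        finally show ?thesis using \<open>k = Suc k'\<close> \<open>l = Suc l'\<close> k l by (simp add: U'0)
      qed
    qed
    finally show "(transpose_mat U' * U')$$(k,l) = 1\<^sub>m ?N $$ (k,l)" using k l by simp
  qed (use U'c in auto)
  have Bdec: "B = U' * mat_diag ?N d' * transpose_mat U'"
  proof (rule eq_matI)
    fix i j assume "i < dim_row (U' * mat_diag ?N d' * transpose_mat U')" "j < dim_col (U' * mat_diag ?N d' * transpose_mat U')"
    then have i: "i < ?N" and j: "j < ?N" using U'c by auto
    have "(U' * mat_diag ?N d' * transpose_mat U')$$(i,j) = (\<Sum>l<?N. U'$$(i,l) * d' l * U'$$(j,l))"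
      by (rule udu_entry[OF U'c i j])
    also have "\<dots> = U'$$(i,0) * d' 0 * U'$$(j,0) + (\<Sum>l<m. U'$$(i,Suc l) * d' (Suc l) * U'$$(j,Suc l))"
      by (subst sum.lessThan_Suc_shift) simp
    also have "\<dots> = B$$(i,j)"
    proof (cases "i = 0 \<or> j = 0")
      case True
      have z: "(\<Sum>l<m. U'$$(i,Suc l) * d' (Suc l) * U'$$(j,Suc l)) = 0"
        by (rule sum.neutral) (use True i j in \<open>auto simp: U'0\<close>)
      show ?thesis
      proof (cases "i = 0")
        case True
        then show ?thesis using z j B0[of j] Bs[of 0 j] by (cases j) (auto simp: U'0 U'S0 d'_def)
      next
        case False
        then have "j = 0" using \<open>i = 0 \<or> j = 0\<close> by simp
        then show ?thesis using z i B0[of i] False by (cases i) (auto simp: U'0 U'S0 d'_def)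
      qed
    next
      case False
      then obtain i' j' where ij: "i = Suc i'" "j = Suc j'" by (cases i; cases j) auto
      have "B$$(i,j) = C$$(i',j')" unfolding C_def using ij i j by simp
      also have "\<dots> = (\<Sum>l<m. V$$(i',l) * D l * V$$(j',l))"
        unfolding CV by (rule udu_entry[OF Vc]) (use ij i j in auto)
      also have "\<dots> = (\<Sum>l<m. U'$$(i,Suc l) * d' (Suc l) * U'$$(j,Suc l))"
        by (rule sum.cong[OF refl]) (use ij i j in \<open>auto simp: U'SS d'_def\<close>)
      finally show ?thesis using ij i j by (simp add: U'S0)
    qed
    finally show "B $$ (i,j) = (U' * mat_diag ?N d' * transpose_mat U')$$(i,j)" by simp
  qed (use Bc U'c in auto)
  define U where "U = H * U'"
  have Uc: "U \<in> carrier_mat ?N ?N" unfolding U_def using Hc U'c by simp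
  have tU: "transpose_mat U = transpose_mat U' * H"
    unfolding U_def using transpose_mult[OF Hc U'c] Ht by simp
  have Uo: "transpose_mat U * U = 1\<^sub>m ?N"
  proof -
    have "transpose_mat U' * H * (H * U') = transpose_mat U' * (H * (H * U'))"
      by (rule assoc_mult_mat[of _ ?N ?N _ ?N _ ?N]) (use Hc U'c in auto)
    then show ?thesis using U'o HHX[OF U'c] by (subst tU) (simp add: U_def)
  qed
  have sq: "\<And>X Y. X \<in> carrier_mat ?N ?N \<Longrightarrow> Y \<in> carrier_mat ?N ?N \<Longrightarrow> X * Y \<in> carrier_mat ?N ?N"
    by auto
  have Dc: "mat_diag ?N d' \<in> carrier_mat ?N ?N" by simp
  have U'tc: "transpose_mat U' \<in> carrier_mat ?N ?N" using U'c by simp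
  note as = assoc_mult_mat[of _ ?N ?N _ ?N _ ?N]
  have "A = H * B * H" unfolding B_def using Hc Ac HH HHX[OF Ac] by (simp add: as sq)
  also have "\<dots> = U * mat_diag ?N d' * transpose_mat U"
    using Hc U'c Dc U'tc by (subst tU) (simp add: U_def Bdec as sq)
  finally show ?case using Uc Uo by blast
qed
lemma mat_fun_spec:
  fixes A :: "real mat"
  assumes A: "A \<in> carrier_mat m m" and sym: "transpose_mat A = A"
  shows "\<exists>U d. U \<in> carrier_mat m m \<and> transpose_mat U * U = 1\<^sub>m m
     \<and> A = U * mat_diag m d * transpose_mat U \<and> mat_trace (mat_fun f A) = (\<Sum>k<m. f (d k))"
proof -
  define P where "P B \<longleftrightarrow> (\<exists>U d. U \<in> carrier_mat m m \<and> transpose_mat U * U = 1\<^sub>m m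
        \<and> A = U * mat_diag m d * transpose_mat U
        \<and> B = U * mat_diag m (\<lambda>i. f (d i)) * transpose_mat U)" for B
  obtain U0 d0 where "U0 \<in> carrier_mat m m" "transpose_mat U0 * U0 = 1\<^sub>m m" "A = U0 * mat_diag m d0 * transpose_mat U0"
    using spectral[OF A sym] by blast
  then have "P (U0 * mat_diag m (\<lambda>i. f (d0 i)) * transpose_mat U0)" unfolding P_def by blast
  then have "P (SOME B. P B)" by (rule someI)
  moreover have "mat_fun f A = (SOME B. P B)" unfolding mat_fun_def Let_def P_def using A by simp
  ultimately obtain U d where U: "U \<in> carrier_mat m m" and o: "transpose_mat U * U = 1\<^sub>m m"
    and dec: "A = U * mat_diag m d * transpose_mat U"
    and mf: "mat_fun f A = U * mat_diag m (\<lambda>i. f (d i)) * transpose_mat U"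
    unfolding P_def by metis
  have "mat_trace (mat_fun f A) = (\<Sum>k<m. f (d k))" unfolding mf by (rule trace_udu[OF U o])
  then show ?thesis using U o dec by blast
qed

lemma convex_on_nonneg:
  fixes f :: "real \<Rightarrow> real"
  assumes cv: "convex_on {0<..} f" and f0: "f 0 = 0"
    and sc: "\<And>t y. 0 \<le> t \<Longrightarrow> t \<le> 1 \<Longrightarrow> 0 \<le> y \<Longrightarrow> f (t * y) \<le> t * f y"
  shows "convex_on {0..} f"
proof (rule convex_onI)
  show "convex {0::real..}" by (rule convex_real_interval)
next
  fix t x y :: real assume t: "0 < t" "t < 1" and x: "x \<in> {0..}" and y: "y \<in> {0..}"
  show "f ((1 - t) *\<^sub>R x + t *\<^sub>R y) \<le> (1 - t) * f x + t * f y"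
  proof (cases "x = 0")
    case True
    then show ?thesis using sc[of t y] t y f0 by simp
  next
    case False
    show ?thesis
    proof (cases "y = 0")
      case True
      then show ?thesis using sc[of "1 - t" x] t x f0 by simp
    next
      case False
      then have "x \<in> {0<..}" "y \<in> {0<..}" using \<open>x \<noteq> 0\<close> x y by auto
      then show ?thesis using convex_onD[OF cv, of t x y] t by simp
    qed
  qed
qed

lemma powr_le_self:
  fixes x \<alpha> :: real
  assumes "0 \<le> x" "x \<le> 1" "1 \<le> \<alpha>"
  shows "x powr \<alpha> \<le> x"
proof (cases "x = 0")
  case True then show ?thesis by simp
next
  case False
  then have "x powr \<alpha> \<le> x powr 1" using assms by (intro powr_mono') auto
  then show ?thesis using False assms by simp
qed

lemma convex_powr0:
  fixes \<alpha> :: real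
  assumes "1 \<le> \<alpha>"
  shows "convex_on {0..} (\<lambda>x. x powr \<alpha>)"
proof (rule convex_on_nonneg)
  show "convex_on {0<..} (\<lambda>x. x powr \<alpha>)" by (rule powr_convex[OF assms])
  show "0 powr \<alpha> = (0::real)" using assms by simp
  fix t y :: real assume t: "0 \<le> t" "t \<le> 1" and y: "0 \<le> y"
  have "(t * y) powr \<alpha> = t powr \<alpha> * y powr \<alpha>" using t y by (simp add: powr_mult)
  also have "\<dots> \<le> t * y powr \<alpha>" using powr_le_self[OF t assms] by (simp add: mult_right_mono)
  finally show "(t * y) powr \<alpha> \<le> t * y powr \<alpha>" .
qed

lemma convex_xlnx0: "convex_on {0..} (\<lambda>x::real. x * ln x)"
proof (rule convex_on_nonneg)
  show "convex_on {0<..} (\<lambda>x::real. x * ln x)"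
  proof (rule f''_ge0_imp_convex[where f' = "\<lambda>x. ln x + 1" and f'' = "\<lambda>x. 1 / x"])
    show "convex {0::real<..}" by (rule convex_real_interval)
    fix x :: real assume x: "x \<in> {0<..}"
    show "((\<lambda>x. x * ln x) has_real_derivative ln x + 1) (at x)"
      using x by (auto intro!: derivative_eq_intros)
    show "((\<lambda>x. ln x + 1) has_real_derivative 1 / x) (at x)"
      using x by (auto intro!: derivative_eq_intros)
    show "0 \<le> 1 / x" using x by simp
  qed
  show "0 * ln 0 = (0::real)" by simp
  fix t y :: real assume t: "0 \<le> t" "t \<le> 1" and y: "0 \<le> y"
  show "t * y * ln (t * y) \<le> t * (y * ln y)"
  proof (cases "t = 0 \<or> y = 0")
    case True then show ?thesis by auto
  next
    case False
    then have tp: "t > 0" and yp: "y > 0" using t y by auto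
    have "ln t \<le> 0" using tp t by simp
    then have "t * y * ln t \<le> 0" using tp yp by (simp add: mult_nonneg_nonpos)
    moreover have "t * y * ln (t * y) = t * y * ln t + t * (y * ln y)"
      using tp yp by (simp add: ln_mult algebra_simps)
    ultimately show ?thesis by simp
  qed
qed

lemma sum_delta2:
  fixes g :: "nat \<Rightarrow> real"
  assumes "a < m"
  shows "(\<Sum>i<m. g i * (if a = i then 1 else 0) * (if b = i then 1 else 0)) = (if a = b then g a else 0)"
proof -
  have "(\<Sum>i<m. g i * (if a = i then 1 else 0) * (if b = i then 1 else 0))
      = (\<Sum>i<m. if i = a then (if a = b then g a else 0) else 0)"
    by (rule sum.cong) auto
  then show ?thesis using assms by simp
qed

lemma diag_major:
  fixes g \<mu> :: "nat \<Rightarrow> real" and U :: "real mat" and \<phi> :: "real \<Rightarrow> real"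
  assumes U: "U \<in> carrier_mat m m" and o: "transpose_mat U * U = 1\<^sub>m m"
    and eq: "mat_diag m g = U * mat_diag m \<mu> * transpose_mat U"
    and g: "\<And>k. k < m \<Longrightarrow> g k \<ge> 0"
    and cv: "convex_on {0..} \<phi>" and \<phi>0: "\<phi> 0 = 0"
  shows "(\<Sum>k<m. \<phi> (\<mu> k)) = (\<Sum>k<m. \<phi> (g k))"
proof -
  have ent: "(\<Sum>l<m. \<mu> l * U$$(a,l) * U$$(b,l)) = (if a = b then g a else 0)" if "a < m" "b < m" for a b
  proof -
    have e1: "mat_diag m g $$ (a,b) = (\<Sum>l<m. U$$(a,l) * \<mu> l * U$$(b,l))"
      by (simp only: eq udu_entry[OF U that])
    have e2: "mat_diag m g $$ (a,b) = (if a = b then g a else 0)" using that by (simp add: mat_diag_def)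
    have e3: "(\<Sum>l<m. \<mu> l * U$$(a,l) * U$$(b,l)) = (\<Sum>l<m. U$$(a,l) * \<mu> l * U$$(b,l))"
      by (rule sum.cong) (auto simp: mult_ac)
    show ?thesis using e1 e2 e3 by simp
  qed
  have sq1: "(\<Sum>a<m. (if a = i then 1 else 0::real)^2) = 1" if "i < m" for i
  proof -
    have "(\<Sum>a<m. (if a = i then 1 else 0::real)^2) = (\<Sum>a<m. if a = i then 1 else 0::real)"
      by (rule sum.cong) auto
    then show ?thesis using that by simp
  qed
  have 1: "(\<forall>k<m. \<mu> k \<ge> 0) \<and> (\<Sum>i\<in>{..<m}. \<phi> (g i)) \<le> (\<Sum>k<m. \<phi> (\<mu> k))"
  proof (rule major[OF U o _ _ _ _ cv \<phi>0, where v = "\<lambda>i a. if a = i then 1 else 0"])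
    fix a b assume "a < m" "b < m"
    then show "(\<Sum>l<m. \<mu> l * U$$(a,l) * U$$(b,l)) = (\<Sum>i\<in>{..<m}. g i * (if a = i then 1 else 0) * (if b = i then 1 else 0))"
      by (simp only: ent sum_delta2)
  qed (auto simp: g sq1)
  have 2: "(\<forall>k<m. g k \<ge> 0) \<and> (\<Sum>i\<in>{..<m}. \<phi> (\<mu> i)) \<le> (\<Sum>k<m. \<phi> (g k))"
  proof (rule major[where U="1\<^sub>m m" and m=m and \<mu>=g and I="{..<m}" and p=\<mu> and v="\<lambda>k a. U$$(a,k)", OF _ _ _ _ _ _ cv \<phi>0])
    fix a b assume "a < m" "b < m"
    then show "(\<Sum>l<m. g l * 1\<^sub>m m $$ (a,l) * 1\<^sub>m m $$ (b,l)) = (\<Sum>i\<in>{..<m}. \<mu> i * U$$(a,i) * U$$(b,i))"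
    proof -
      have "(\<Sum>l<m. g l * 1\<^sub>m m $$ (a,l) * 1\<^sub>m m $$ (b,l)) = (\<Sum>l<m. g l * (if a = l then 1 else 0) * (if b = l then 1 else 0))"
        by (rule sum.cong) (use \<open>a < m\<close> \<open>b < m\<close> in auto)
      also have "\<dots> = (if a = b then g a else 0)" by (rule sum_delta2[OF \<open>a < m\<close>])
      finally show ?thesis using ent \<open>a < m\<close> \<open>b < m\<close> by simp
    qed
  next
    fix i assume "i \<in> {..<m}"
    then show "(\<Sum>a<m. (U$$(a,i))^2) = 1" using orth_cols[OF U o, of i i] by (simp add: power2_eq_square)
  qed (use 1 in auto)
  show ?thesis using 1 2 by simp
qed
lemma decomp_entries:
  fixes U :: "real mat"
  assumes U: "U \<in> carrier_mat m m" and A: "A = U * mat_diag m d * transpose_mat U"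
    and a: "a < m" and b: "b < m"
  shows "A$$(a,b) = (\<Sum>l<m. d l * U$$(a,l) * U$$(b,l))"
proof -
  have "A$$(a,b) = (\<Sum>l<m. U$$(a,l) * d l * U$$(b,l))" unfolding A by (rule udu_entry[OF U a b])
  also have "\<dots> = (\<Sum>l<m. d l * U$$(a,l) * U$$(b,l))" by (rule sum.cong) (auto simp: mult_ac)
  finally show ?thesis .
qed

lemma psd_qf:
  fixes \<rho> :: "real mat"
  assumes r: "\<rho> \<in> carrier_mat m m" and psd: "\<forall>v \<in> carrier_vec m. v \<bullet> (\<rho> *\<^sub>v v) \<ge> 0"
  shows "(\<Sum>a<m. \<Sum>b<m. x a * \<rho>$$(a,b) * x b) \<ge> 0"
proof -
  define v where "v = vec m x"
  have v: "v \<in> carrier_vec m" unfolding v_def by simp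
  have "v \<bullet> (\<rho> *\<^sub>v v) = (\<Sum>a<m. x a * (\<Sum>b<m. \<rho>$$(a,b) * x b))"
    unfolding v_def using r by (simp add: scalar_prod_def atLeast0LessThan)
  also have "\<dots> = (\<Sum>a<m. \<Sum>b<m. x a * \<rho>$$(a,b) * x b)"
    by (simp add: sum_distrib_left mult_ac)
  finally show ?thesis using psd v by metis
qed

lemma eig_nonneg:
  fixes \<rho> U :: "real mat"
  assumes r: "\<rho> \<in> carrier_mat m m" and psd: "\<forall>v \<in> carrier_vec m. v \<bullet> (\<rho> *\<^sub>v v) \<ge> 0"
    and U: "U \<in> carrier_mat m m" and o: "transpose_mat U * U = 1\<^sub>m m"
    and dec: "\<rho> = U * mat_diag m d * transpose_mat U" and k: "k < m"
  shows "d k \<ge> 0"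
proof -
  have "(\<Sum>a<m. \<Sum>b<m. U$$(a,k) * \<rho>$$(a,b) * U$$(b,k)) = (\<Sum>l<m. d l * (\<Sum>a<m. U$$(a,k) * U$$(a,l))^2)"
    by (rule qf_gen[of "{..<m}" m "\<lambda>a b. \<rho>$$(a,b)" d "\<lambda>l a. U$$(a,l)"])
       (auto simp: decomp_entries[OF U dec])
  also have "\<dots> = (\<Sum>l<m. if k = l then d l else 0)"
    by (rule sum.cong) (auto simp: orth_cols[OF U o] k)
  also have "\<dots> = d k" using k by simp
  finally show ?thesis using psd_qf[OF r psd, of "\<lambda>a. U$$(a,k)"] by simp
qed

lemma sum_delta1:
  fixes f :: "real \<Rightarrow> real" and j m :: nat
  assumes "j < m" "f 0 = 0"
  shows "(\<Sum>k<m. f (if k = j then 1 else 0)) = f 1"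
proof -
  have "(\<Sum>k<m. f (if k = j then 1 else 0)) = (\<Sum>k<m. if k = j then f 1 else 0)"
    by (rule sum.cong) (auto simp: assms)
  also have "\<dots> = f 1" using sum.delta[of "{..<m}" j "\<lambda>_. f 1"] assms(1) by simp
  finally show ?thesis .
qed
theorem proposition3:
  fixes \<alpha> :: real and m n :: nat and \<omega> :: "nat \<Rightarrow> real" and \<rho> :: "nat \<Rightarrow> real mat"
  assumes "1 \<le> \<alpha>" and "\<alpha> \<le> 2"
    and "1 \<le> n" and "n \<le> m"
    and "\<forall>j<n. \<omega> j \<ge> 0" and "(\<Sum>j<n. \<omega> j) = 1"
    and "\<forall>j<n. density_mat m (\<rho> j)"
  shows "(\<forall>j<n. density_mat m (delta_mat m j))
    \<and> jensen_tsallis \<alpha> m n \<omega> \<rho> \<le> jensen_tsallis \<alpha> m n \<omega> (delta_mat m)"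
proof -
  note a1 = assms(1) and nm = assms(4) and w0 = assms(5) and w1 = assms(6) and dens = assms(7)
  have w0': "\<And>j. j < n \<Longrightarrow> \<omega> j \<ge> 0" using w0 by auto
  have wle1: "\<omega> j \<le> 1" if "j < n" for j
  proof -
    have "\<omega> j \<le> (\<Sum>j<n. \<omega> j)" by (rule member_le_sum) (use that w0' in auto)
    then show ?thesis using w1 by simp
  qed
  have dd: "density_mat m (delta_mat m j)" if j: "j < n" for j
  proof -
    have jm: "j < m" using j nm by simp
    have c: "delta_mat m j \<in> carrier_mat m m" unfolding delta_mat_def by simp
    have t: "transpose_mat (delta_mat m j) = delta_mat m j"
      unfolding delta_mat_def by (rule eq_matI) (auto simp: mat_diag_def)
    have p: "v \<bullet> (delta_mat m j *\<^sub>v v) \<ge> 0" if v: "v \<in> carrier_vec m" for v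
    proof -
      have "v \<bullet> (delta_mat m j *\<^sub>v v) = (\<Sum>a<m. v$a * (\<Sum>b<m. (if a = b then (if b = j then 1 else 0) else 0) * v$b))"
        unfolding delta_mat_def using v by (simp add: scalar_prod_def atLeast0LessThan mat_diag_def)
      also have "\<dots> = (\<Sum>a<m. if a = j then v$a * v$a else 0)"
      proof (rule sum.cong[OF refl])
        fix a assume a: "a \<in> {..<m}"
        have "(\<Sum>b<m. (if a = b then (if b = j then 1 else 0) else 0) * v$b)
            = (\<Sum>b<m. if b = a then (if a = j then v$a else 0) else 0)"
          by (rule sum.cong) auto
        also have "\<dots> = (if a = j then v$a else 0)" using a by simp
        finally show "v$a * (\<Sum>b<m. (if a = b then (if b = j then 1 else 0) else 0) * v$b)
            = (if a = j then v$a * v$a else 0)" by simp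
      qed
      also have "\<dots> = v$j * v$j" using jm by simp
      finally show ?thesis by simp
    qed
    have tr: "mat_trace (delta_mat m j) = 1"
      unfolding mat_trace_def delta_mat_def using jm by (simp add: mat_diag_def)
    show ?thesis unfolding density_mat_def using c t p tr by blast
  qed
  define \<phi> where "\<phi> = (if \<alpha> = 1 then (\<lambda>x::real. x * ln x) else (\<lambda>x. x powr \<alpha>))"
  define G where "G s = (if \<alpha> = 1 then - s else (s - 1) / (1 - \<alpha>))" for s :: real
  have ts: "tsallis_entropy \<alpha> X = G (mat_trace (mat_fun \<phi> X))" for X
    unfolding tsallis_entropy_def G_def \<phi>_def by auto
  have cv: "convex_on {0..} \<phi>"
    unfolding \<phi>_def using convex_powr0[OF a1] convex_xlnx0 by simp
  have \<phi>0: "\<phi> 0 = 0" unfolding \<phi>_def using a1 by simp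
  have Gmono: "G t \<le> G s" if "s \<le> t" for s t
  proof (cases "\<alpha> = 1")
    case True then show ?thesis unfolding G_def using that by simp
  next
    case False
    then have "1 - \<alpha> < 0" using a1 by simp
    then show ?thesis unfolding G_def using False that by (simp add: divide_right_mono_neg)
  qed
  have G1: "G (\<phi> 1) = 0" unfolding G_def \<phi>_def by simp
  have "\<forall>j. \<exists>p. j < n \<longrightarrow> (fst p \<in> carrier_mat m m \<and> transpose_mat (fst p) * fst p = 1\<^sub>m m
      \<and> \<rho> j = fst p * mat_diag m (snd p) * transpose_mat (fst p)
      \<and> mat_trace (mat_fun \<phi> (\<rho> j)) = (\<Sum>k<m. \<phi> (snd p k)))"
  proof
    fix j
    show "\<exists>p. j < n \<longrightarrow> (fst p \<in> carrier_mat m m \<and> transpose_mat (fst p) * fst p = 1\<^sub>m m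
      \<and> \<rho> j = fst p * mat_diag m (snd p) * transpose_mat (fst p)
      \<and> mat_trace (mat_fun \<phi> (\<rho> j)) = (\<Sum>k<m. \<phi> (snd p k)))"
    proof (cases "j < n")
      case True
      then have "\<rho> j \<in> carrier_mat m m" "transpose_mat (\<rho> j) = \<rho> j"
        using dens unfolding density_mat_def by auto
      from mat_fun_spec[OF this, of \<phi>] obtain U d where
        "U \<in> carrier_mat m m \<and> transpose_mat U * U = 1\<^sub>m m \<and> \<rho> j = U * mat_diag m d * transpose_mat U
          \<and> mat_trace (mat_fun \<phi> (\<rho> j)) = (\<Sum>k<m. \<phi> (d k))" by blast
      note P = this
      show ?thesis
      proof (rule exI[of _ "(U, d)"])
        show "j < n \<longrightarrow> (fst (U, d) \<in> carrier_mat m m \<and> transpose_mat (fst (U, d)) * fst (U, d) = 1\<^sub>m m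
          \<and> \<rho> j = fst (U, d) * mat_diag m (snd (U, d)) * transpose_mat (fst (U, d))
          \<and> mat_trace (mat_fun \<phi> (\<rho> j)) = (\<Sum>k<m. \<phi> (snd (U, d) k)))"
          using P unfolding fst_conv snd_conv by blast
      qed
    qed simp
  qed
  then obtain F where F: "\<And>j. j < n \<Longrightarrow> (fst (F j) \<in> carrier_mat m m \<and> transpose_mat (fst (F j)) * fst (F j) = 1\<^sub>m m
      \<and> \<rho> j = fst (F j) * mat_diag m (snd (F j)) * transpose_mat (fst (F j))
      \<and> mat_trace (mat_fun \<phi> (\<rho> j)) = (\<Sum>k<m. \<phi> (snd (F j) k)))"
    by (metis choice)
  define UU where "UU j = fst (F j)" for j
  define lam where "lam j = snd (F j)" for j
  have UUc: "UU j \<in> carrier_mat m m" and UUo: "transpose_mat (UU j) * UU j = 1\<^sub>m m"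
    and rdec: "\<rho> j = UU j * mat_diag m (lam j) * transpose_mat (UU j)"
    and trr: "mat_trace (mat_fun \<phi> (\<rho> j)) = (\<Sum>k<m. \<phi> (lam j k))" if "j < n" for j
    using F[OF that] unfolding UU_def lam_def by auto
  have rc: "\<rho> j \<in> carrier_mat m m" and rt: "transpose_mat (\<rho> j) = \<rho> j"
    and rpsd: "\<forall>v \<in> carrier_vec m. v \<bullet> (\<rho> j *\<^sub>v v) \<ge> 0" and rtr: "mat_trace (\<rho> j) = 1"
    if "j < n" for j using dens that unfolding density_mat_def by auto
  have lam0: "lam j k \<ge> 0" if "j < n" "k < m" for j k
    by (rule eig_nonneg[OF rc rpsd UUc UUo rdec]) (use that in auto)
  have lam1: "(\<Sum>k<m. lam j k) = 1" if "j < n" for j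
    using rtr[OF that] trace_udu[OF UUc[OF that] UUo[OF that], of "lam j"] rdec[OF that] by simp
  have lamle: "lam j k \<le> 1" if "j < n" "k < m" for j k
  proof -
    have "lam j k \<le> (\<Sum>k<m. lam j k)" by (rule member_le_sum) (use that lam0 in auto)
    then show ?thesis using lam1[OF that(1)] by simp
  qed
  have rsym: "\<rho> j $$ (a,b) = \<rho> j $$ (b,a)" if "j < n" "a < m" "b < m" for j a b
  proof -
    have "transpose_mat (\<rho> j) $$ (a,b) = \<rho> j $$ (b,a)" using rc[OF that(1)] that by simp
    then show ?thesis using rt[OF that(1)] by simp
  qed
  define M where "M = weighted_mat_sum m n \<omega> \<rho>"
  have Mc: "M \<in> carrier_mat m m" unfolding M_def weighted_mat_sum_def by simp
  have Me: "M $$ (a,b) = (\<Sum>j<n. \<omega> j * \<rho> j $$ (a,b))" if "a < m" "b < m" for a b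
    unfolding M_def weighted_mat_sum_def using that by simp
  have Mt: "transpose_mat M = M"
    by (rule eq_matI) (use Mc in \<open>auto simp: Me rsym\<close>)
  obtain UM \<mu> where UMc: "UM \<in> carrier_mat m m" and UMo: "transpose_mat UM * UM = 1\<^sub>m m"
    and Mdec: "M = UM * mat_diag m \<mu> * transpose_mat UM"
    and trM: "mat_trace (mat_fun \<phi> M) = (\<Sum>k<m. \<phi> (\<mu> k))"
    using mat_fun_spec[OF Mc Mt, of \<phi>] by blast
  define I where "I = {..<n} \<times> {..<m}"
  define p where "p x = \<omega> (fst x) * lam (fst x) (snd x)" for x
  define v where "v x a = UU (fst x) $$ (a, snd x)" for x a
  have maj: "(\<forall>k<m. \<mu> k \<ge> 0) \<and> (\<Sum>x\<in>I. \<phi> (p x)) \<le> (\<Sum>k<m. \<phi> (\<mu> k))"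
  proof (rule major[OF UMc UMo _ _ _ _ cv \<phi>0])
    fix a b assume a: "a < m" and b: "b < m"
    have "(\<Sum>l<m. \<mu> l * UM$$(a,l) * UM$$(b,l)) = M$$(a,b)"
      using decomp_entries[OF UMc Mdec a b] by simp
    also have "\<dots> = (\<Sum>j<n. \<omega> j * (\<Sum>k<m. lam j k * UU j $$ (a,k) * UU j $$ (b,k)))"
      unfolding Me[OF a b] by (rule sum.cong) (auto simp: decomp_entries[OF UUc rdec a b])
    also have "\<dots> = (\<Sum>j<n. \<Sum>k<m. p (j,k) * v (j,k) a * v (j,k) b)"
      unfolding p_def v_def by (simp add: sum_distrib_left mult_ac)
    also have "\<dots> = (\<Sum>x\<in>I. p x * v x a * v x b)"
      unfolding I_def by (simp add: sum.cartesian_product split_def)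
    finally show "(\<Sum>l<m. \<mu> l * UM$$(a,l) * UM$$(b,l)) = (\<Sum>x\<in>I. p x * v x a * v x b)" .
  next
    show "finite I" unfolding I_def by simp
  next
    fix x assume "x \<in> I"
    then show "p x \<ge> 0" unfolding I_def p_def using w0' lam0 by auto
  next
    fix x assume x: "x \<in> I"
    then have "fst x < n" "snd x < m" unfolding I_def by auto
    then show "(\<Sum>a<m. (v x a)^2) = 1" unfolding v_def
      using orth_cols[OF UUc UUo, of "fst x" "snd x" "snd x"] by (simp add: power2_eq_square)
  qed
  have sumI: "(\<Sum>x\<in>I. \<phi> (p x)) = (\<Sum>j<n. \<Sum>k<m. \<phi> (\<omega> j * lam j k))"
    unfolding I_def p_def by (simp add: sum.cartesian_product split_def)
  have HM: "tsallis_entropy \<alpha> M \<le> G (\<Sum>j<n. \<Sum>k<m. \<phi> (\<omega> j * lam j k))"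
    unfolding ts trM using Gmono maj sumI by simp
  have Hr: "tsallis_entropy \<alpha> (\<rho> j) = G (\<Sum>k<m. \<phi> (lam j k))" if "j < n" for j
    unfolding ts trr[OF that] ..
  define \<omega>' where "\<omega>' k = (if k < n then \<omega> k else 0)" for k
  have Wd: "weighted_mat_sum m n \<omega> (delta_mat m) = mat_diag m \<omega>'"
  proof (rule eq_matI)
    fix a b assume "a < dim_row (mat_diag m \<omega>')" "b < dim_col (mat_diag m \<omega>')"
    then have a: "a < m" and b: "b < m" by (auto simp: mat_diag_def)
    have "weighted_mat_sum m n \<omega> (delta_mat m) $$ (a,b) = (\<Sum>j<n. \<omega> j * (if a = b then (if b = j then 1 else 0) else 0))"
      unfolding weighted_mat_sum_def delta_mat_def using a b by (simp add: mat_diag_def)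
    also have "\<dots> = (if a = b then \<omega>' a else 0)"
    proof (cases "a = b")
      case True
      have "(\<Sum>j<n. \<omega> j * (if a = b then (if b = j then 1 else 0) else 0)) = (\<Sum>j<n. if j = b then \<omega> j else 0)"
        by (rule sum.cong) (auto simp: True)
      then show ?thesis using True unfolding \<omega>'_def by simp
    qed simp
    finally show "weighted_mat_sum m n \<omega> (delta_mat m) $$ (a,b) = mat_diag m \<omega>' $$ (a,b)"
      using a b by (simp add: mat_diag_def)
  qed (auto simp: weighted_mat_sum_def mat_diag_def)
  have diagH: "tsallis_entropy \<alpha> (mat_diag m g) = G (\<Sum>k<m. \<phi> (g k))"
    if g: "\<And>k. k < m \<Longrightarrow> g k \<ge> 0" for g
  proof -
    have c: "mat_diag m g \<in> carrier_mat m m" by simp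
    have t: "transpose_mat (mat_diag m g) = mat_diag m g" by (rule eq_matI) (auto simp: mat_diag_def)
    obtain U d where U: "U \<in> carrier_mat m m" and o: "transpose_mat U * U = 1\<^sub>m m"
      and dec: "mat_diag m g = U * mat_diag m d * transpose_mat U"
      and tr: "mat_trace (mat_fun \<phi> (mat_diag m g)) = (\<Sum>k<m. \<phi> (d k))"
      using mat_fun_spec[OF c t, of \<phi>] by blast
    show ?thesis unfolding ts tr using diag_major[OF U o dec g cv \<phi>0] by simp
  qed
  have HW: "tsallis_entropy \<alpha> (weighted_mat_sum m n \<omega> (delta_mat m)) = G (\<Sum>j<n. \<phi> (\<omega> j))"
  proof -
    have "tsallis_entropy \<alpha> (weighted_mat_sum m n \<omega> (delta_mat m)) = G (\<Sum>k<m. \<phi> (\<omega>' k))"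
      unfolding Wd by (rule diagH) (auto simp: \<omega>'_def w0')
    also have "(\<Sum>k<m. \<phi> (\<omega>' k)) = (\<Sum>k<m. if k \<in> {..<n} then \<phi> (\<omega> k) else 0)"
      by (rule sum.cong) (auto simp: \<omega>'_def \<phi>0)
    also have "\<dots> = (\<Sum>k\<in>{..<m} \<inter> {..<n}. \<phi> (\<omega> k))"
      by (rule sum.inter_restrict[symmetric]) simp
    also have "{..<m} \<inter> {..<n} = {..<n}" using nm by auto
    finally show ?thesis .
  qed
  have Hd: "tsallis_entropy \<alpha> (delta_mat m j) = 0" if "j < n" for j
  proof -
    have jm: "j < m" using that nm by simp
    have "tsallis_entropy \<alpha> (delta_mat m j) = G (\<Sum>k<m. \<phi> (if k = j then 1 else 0))"
      unfolding delta_mat_def by (rule diagH) auto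
    also have "\<dots> = G (\<phi> 1)" using sum_delta1[of j m \<phi>] jm \<phi>0 by simp
    finally show ?thesis using G1 by simp
  qed
  have RHS: "jensen_tsallis \<alpha> m n \<omega> (delta_mat m) = G (\<Sum>j<n. \<phi> (\<omega> j))"
    unfolding jensen_tsallis_def HW using Hd by simp
  have LHS: "jensen_tsallis \<alpha> m n \<omega> \<rho> \<le> G (\<Sum>j<n. \<Sum>k<m. \<phi> (\<omega> j * lam j k)) - (\<Sum>j<n. \<omega> j * G (\<Sum>k<m. \<phi> (lam j k)))"
    unfolding jensen_tsallis_def M_def[symmetric] using HM Hr by simp
  define S where "S j = (\<Sum>k<m. \<phi> (lam j k))" for j
  have final: "G (\<Sum>j<n. \<Sum>k<m. \<phi> (\<omega> j * lam j k)) - (\<Sum>j<n. \<omega> j * G (S j)) \<le> G (\<Sum>j<n. \<phi> (\<omega> j))"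
  proof (cases "\<alpha> = 1")
    case True
    have pt: "\<phi> (\<omega> j * lam j k) = lam j k * \<phi> (\<omega> j) + \<omega> j * \<phi> (lam j k)" if "j < n" "k < m" for j k
    proof (cases "\<omega> j = 0 \<or> lam j k = 0")
      case True then show ?thesis unfolding \<phi>_def using \<open>\<alpha> = 1\<close> by auto
    next
      case False
      then have "\<omega> j > 0" "lam j k > 0" using w0' lam0 that by (auto simp: less_le)
      then show ?thesis unfolding \<phi>_def using \<open>\<alpha> = 1\<close> by (simp add: ln_mult algebra_simps)
    qed
    have "(\<Sum>j<n. \<Sum>k<m. \<phi> (\<omega> j * lam j k)) = (\<Sum>j<n. \<phi> (\<omega> j) + \<omega> j * S j)"
    proof (rule sum.cong[OF refl])
      fix j assume j: "j \<in> {..<n}"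
      have "(\<Sum>k<m. \<phi> (\<omega> j * lam j k)) = (\<Sum>k<m. lam j k * \<phi> (\<omega> j) + \<omega> j * \<phi> (lam j k))"
        by (rule sum.cong) (use j pt in auto)
      also have "\<dots> = (\<Sum>k<m. lam j k) * \<phi> (\<omega> j) + \<omega> j * S j"
        unfolding S_def by (simp add: sum.distrib sum_distrib_left sum_distrib_right)
      finally show "(\<Sum>k<m. \<phi> (\<omega> j * lam j k)) = \<phi> (\<omega> j) + \<omega> j * S j" using lam1 j by simp
    qed
    then show ?thesis unfolding G_def using True by (simp add: sum.distrib sum_negf)
  next
    case False
    then have a1': "\<alpha> > 1" using a1 by simp
    have phiw: "\<phi> x = x powr \<alpha>" for x unfolding \<phi>_def using False by simp
    have pt: "\<phi> (\<omega> j * lam j k) = \<phi> (\<omega> j) * \<phi> (lam j k)" if "j < n" "k < m" for j k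
      unfolding phiw using w0' lam0 that by (simp add: powr_mult)
    have A: "(\<Sum>j<n. \<Sum>k<m. \<phi> (\<omega> j * lam j k)) = (\<Sum>j<n. \<phi> (\<omega> j) * S j)"
      unfolding S_def by (rule sum.cong[OF refl]) (auto simp: pt sum_distrib_left)
    have Sle: "S j \<le> 1" if "j < n" for j
    proof -
      have "S j \<le> (\<Sum>k<m. lam j k)" unfolding S_def phiw
        by (rule sum_mono) (use powr_le_self lam0 lamle that a1 in auto)
      then show ?thesis using lam1[OF that] by simp
    qed
    have wle: "\<phi> (\<omega> j) \<le> \<omega> j" if "j < n" for j
      unfolding phiw using powr_le_self w0' wle1 that a1 by auto
    have key: "0 \<le> (\<Sum>j<n. (\<phi> (\<omega> j) - \<omega> j) * (S j - 1))"
      by (rule sum_nonneg) (use Sle wle in \<open>auto intro: mult_nonpos_nonpos\<close>)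
    have neg: "1 - \<alpha> < 0" using a1' by simp
    have e1: "(\<Sum>j<n. \<omega> j * ((S j - 1) / (1 - \<alpha>))) = ((\<Sum>j<n. \<omega> j * S j) - 1) / (1 - \<alpha>)"
      using w1 by (simp add: sum_divide_distrib[symmetric] right_diff_distrib sum_subtractf)
    have e2: "(\<Sum>j<n. (\<phi> (\<omega> j) - \<omega> j) * (S j - 1))
        = (\<Sum>j<n. \<phi> (\<omega> j) * S j) - (\<Sum>j<n. \<omega> j * S j) - (\<Sum>j<n. \<phi> (\<omega> j)) + 1"
      using w1 by (simp add: algebra_simps sum.distrib sum_subtractf)
    have "((\<Sum>j<n. \<phi> (\<omega> j) * S j) - 1) / (1 - \<alpha>) - ((\<Sum>j<n. \<omega> j * S j) - 1) / (1 - \<alpha>)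
        \<le> ((\<Sum>j<n. \<phi> (\<omega> j)) - 1) / (1 - \<alpha>)"
    proof -
      have "((\<Sum>j<n. \<phi> (\<omega> j) * S j) - 1) - ((\<Sum>j<n. \<omega> j * S j) - 1) \<ge> (\<Sum>j<n. \<phi> (\<omega> j)) - 1"
        using key e2 by linarith
      then have "(((\<Sum>j<n. \<phi> (\<omega> j) * S j) - 1) - ((\<Sum>j<n. \<omega> j * S j) - 1)) / (1 - \<alpha>)
          \<le> ((\<Sum>j<n. \<phi> (\<omega> j)) - 1) / (1 - \<alpha>)"
        using neg by (simp add: divide_right_mono_neg)
      then show ?thesis by (simp add: diff_divide_distrib)
    qed
    then show ?thesis unfolding G_def A using False e1 by simp
  qed
  show ?thesis using dd LHS RHS final unfolding S_def by simp
qed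

end
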